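(* Let $k$ be a nonnegative integer and let $i,j\geq k+2$ be integers. Then $$R_k^{\mathcal{CO}}(i,j)=1+\frac{(i-1)(j-1)-\{i-1\}\{j-1\}}{k+1},$$ where $\{x\}\in\{0,1,\dots,k\}$ denotes the residue of the integer $x$ modulo $k+1$ and $\mathcal{CO}$ is the class of cographs.
   Context: All graphs are finite and simple. For a graph $G$ and a nonnegative integer $k$, a $k$-sparse $j$-set is a set of $j$ vertices of $G$ inducing a subgraph of maximum degree at most $k$; a $k$-dense $i$-set is a set of $i$ vertices of $G$ that is $k$-sparse in the complement of $G$. For a graph class $\mathcal{G}$, $R_k^{\mathcal{G}}(i,j)$ is the smallest natural number $n$ such that every graph on $n$ vertices in $\mathcal{G}$ has either a $k$-dense $i$-set or a $k$-sparse $j$-set. A cograph is a graph containing no induced path on four vertices (equivalently, the complement of every connected induced subgraph on at least two vertices is disconnected). *)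

theory Defs
  imports Main
begin

text \<open>A finite simple graph on vertex set V is given by a symmetric, irreflexive
edge relation E (only its restriction to V matters).\<close>
definition simple_graph :: "'a set \<Rightarrow> ('a \<Rightarrow> 'a \<Rightarrow> bool) \<Rightarrow> bool" where
  "simple_graph V E \<longleftrightarrow> finite V \<and> (\<forall>u\<in>V. \<forall>v\<in>V. E u v \<longrightarrow> E v u) \<and> (\<forall>v\<in>V. \<not> E v v)"

definition compl_graph :: "('a \<Rightarrow> 'a \<Rightarrow> bool) \<Rightarrow> 'a \<Rightarrow> 'a \<Rightarrow> bool" where
  "compl_graph E u v \<longleftrightarrow> u \<noteq> v \<and> \<not> E u v"

definition k_sparse :: "nat \<Rightarrow> ('a \<Rightarrow> 'a \<Rightarrow> bool) \<Rightarrow> 'a set \<Rightarrow> bool" where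
  "k_sparse k E S \<longleftrightarrow> (\<forall>v\<in>S. card {u\<in>S. E v u} \<le> k)"

definition k_dense :: "nat \<Rightarrow> ('a \<Rightarrow> 'a \<Rightarrow> bool) \<Rightarrow> 'a set \<Rightarrow> bool" where
  "k_dense k E S \<longleftrightarrow> k_sparse k (compl_graph E) S"

definition cograph :: "'a set \<Rightarrow> ('a \<Rightarrow> 'a \<Rightarrow> bool) \<Rightarrow> bool" where
  "cograph V E \<longleftrightarrow> simple_graph V E \<and>
     \<not> (\<exists>a\<in>V. \<exists>b\<in>V. \<exists>c\<in>V. \<exists>d\<in>V. distinct [a,b,c,d] \<and>
          E a b \<and> E b c \<and> E c d \<and> \<not> E a c \<and> \<not> E b d \<and> \<not> E a d)"

text \<open>Ramsey number for cographs. Every graph on n vertices is isomorphic to one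
on the vertex set {0..<n}, so it suffices to quantify over those.\<close>
definition ramsey_CO :: "nat \<Rightarrow> nat \<Rightarrow> nat \<Rightarrow> nat" where
  "ramsey_CO k i j = (LEAST n. \<forall>E :: nat \<Rightarrow> nat \<Rightarrow> bool. cograph {0..<n} E \<longrightarrow>
      (\<exists>S\<subseteq>{0..<n}. card S = i \<and> k_dense k E S) \<or>
      (\<exists>S\<subseteq>{0..<n}. card S = j \<and> k_sparse k E S))"

end

theory Submission
  imports Defs
begin


lemma sg_finite: "simple_graph V E \<Longrightarrow> finite V" by (simp add: simple_graph_def)
lemma sg_sym: "simple_graph V E \<Longrightarrow> u \<in> V \<Longrightarrow> v \<in> V \<Longrightarrow> E u v \<Longrightarrow> E v u"
  by (simp add: simple_graph_def)
lemma sg_irr: "simple_graph V E \<Longrightarrow> v \<in> V \<Longrightarrow> \<not> E v v"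
  by (simp add: simple_graph_def)

lemma sg_subset: "simple_graph V E \<Longrightarrow> W \<subseteq> V \<Longrightarrow> simple_graph W E"
  unfolding simple_graph_def by (auto intro: finite_subset)

lemma cograph_subset: "cograph V E \<Longrightarrow> W \<subseteq> V \<Longrightarrow> cograph W E"
  unfolding cograph_def using sg_subset by blast

lemma sg_compl: "simple_graph V E \<Longrightarrow> simple_graph V (compl_graph E)"
  unfolding simple_graph_def compl_graph_def by auto

lemma cograph_compl: "cograph V E \<Longrightarrow> cograph V (compl_graph E)"
proof -
  assume c: "cograph V E"
  hence sg: "simple_graph V E" by (simp add: cograph_def)
  show ?thesis unfolding cograph_def
  proof (intro conjI sg_compl[OF sg] notI)
    assume "\<exists>a\<in>V. \<exists>b\<in>V. \<exists>c\<in>V. \<exists>d\<in>V. distinct [a, b, c, d] \<and> compl_graph E a b \<and> compl_graph E b c \<and>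
         compl_graph E c d \<and> \<not> compl_graph E a c \<and> \<not> compl_graph E b d \<and> \<not> compl_graph E a d"
    then obtain a b cc d where V: "a \<in> V" "b \<in> V" "cc \<in> V" "d \<in> V" and h: "distinct [a, b, cc, d]" 
      "compl_graph E a b" "compl_graph E b cc"
      "compl_graph E cc d" "\<not> compl_graph E a cc" "\<not> compl_graph E b d" "\<not> compl_graph E a d" by blast
    have "E cc a" "E a d" "E d b" "\<not> E cc d" "\<not> E a b" "\<not> E cc b"
      using h V sg_sym[OF sg] unfolding compl_graph_def by auto
    moreover have "distinct [cc, a, d, b]" using h by auto
    ultimately show False using c V unfolding cograph_def by blast
  qed
qed

lemma compl_compl_sparse:
  assumes "simple_graph V E" "S \<subseteq> V"
  shows "k_dense k (compl_graph E) S \<longleftrightarrow> k_sparse k E S"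
proof -
  have "\<And>v. v \<in> S \<Longrightarrow> {u\<in>S. compl_graph (compl_graph E) v u} = {u\<in>S. E v u}"
    using assms sg_irr[OF assms(1)] unfolding compl_graph_def by auto
  thus ?thesis unfolding k_dense_def k_sparse_def by simp
qed

lemma sparse_mono: "finite S \<Longrightarrow> S' \<subseteq> S \<Longrightarrow> k_sparse k E S \<Longrightarrow> k_sparse k E S'"
  unfolding k_sparse_def
proof
  fix v assume f: "finite S" and s: "S' \<subseteq> S" and h: "\<forall>v\<in>S. card {u \<in> S. E v u} \<le> k" and v: "v \<in> S'"
  have "card {u \<in> S'. E v u} \<le> card {u \<in> S. E v u}" using f s by (intro card_mono) auto
  thus "card {u \<in> S'. E v u} \<le> k" using h v s by fastforce
qed

lemma dense_mono: "finite S \<Longrightarrow> S' \<subseteq> S \<Longrightarrow> k_dense k E S \<Longrightarrow> k_dense k E S'"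
  unfolding k_dense_def using sparse_mono by blast

lemma small_sparse:
  assumes "simple_graph V E" "S \<subseteq> V" "card S \<le> k + 1"
  shows "k_sparse k E S"
  unfolding k_sparse_def
proof
  fix v assume v: "v \<in> S"
  have f: "finite S" using assms finite_subset sg_finite by blast
  have "{u \<in> S. E v u} \<subseteq> S - {v}" using sg_irr[OF assms(1)] v assms(2) by auto
  hence "card {u \<in> S. E v u} \<le> card (S - {v})" using f by (intro card_mono) auto
  also have "\<dots> = card S - 1" using v f by simp
  finally show "card {u \<in> S. E v u} \<le> k" using assms(3) by simp
qed

lemma nbr_bound:
  assumes "k_sparse k E S" "v \<in> S" "T \<subseteq> S" "\<forall>u\<in>T. E v u" "finite S"
  shows "card T \<le> k"
proof -
  have "card T \<le> card {u \<in> S. E v u}" using assms by (intro card_mono) auto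
  thus ?thesis using assms unfolding k_sparse_def by fastforce
qed

lemma nonnbr_bound:
  assumes "k_dense k E S" "v \<in> S" "T \<subseteq> S" "\<forall>u\<in>T. u \<noteq> v \<and> \<not> E v u" "finite S"
  shows "card T \<le> k"
  using nbr_bound[of k "compl_graph E" S v T] assms unfolding k_dense_def compl_graph_def by auto



definition nosplit :: "'a set \<Rightarrow> ('a \<Rightarrow> 'a \<Rightarrow> bool) \<Rightarrow> 'a set \<Rightarrow> bool" where
  "nosplit V E A \<longleftrightarrow> A \<subseteq> V \<and> A \<noteq> {} \<and> A \<noteq> V \<and> (\<forall>a\<in>A. \<forall>b\<in>V-A. \<not> E a b)"

lemma nosplit_compl:
  "A \<subseteq> V \<Longrightarrow> A \<noteq> {} \<Longrightarrow> A \<noteq> V \<Longrightarrow> \<forall>a\<in>A. \<forall>b\<in>V-A. E a b \<Longrightarrow> nosplit V (compl_graph E) A"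
  unfolding nosplit_def compl_graph_def by auto

lemma core_split4:
  assumes c: "cograph V E" and v: "v \<in> V" and A: "A \<subseteq> V - {v}" and B: "B \<subseteq> V - {v}"
    and AB: "A \<inter> B = {}" and noe: "\<forall>a\<in>A. \<forall>b\<in>B. \<not> E a b"
    and w0: "w0 \<in> A" "E v w0" and z: "z \<in> B" "E v z" and u: "u \<in> A" "\<not> E v u"
    and cov: "V = A \<union> B \<union> {v}"
  shows "\<exists>A'. nosplit V E A'"
proof (cases "\<exists>w\<in>A. \<exists>u'\<in>A. E v w \<and> \<not> E v u' \<and> E w u'")
  case True
  have sg: "simple_graph V E" using c by (simp add: cograph_def)
  then obtain w u' where h: "w \<in> A" "u' \<in> A" "E v w" "\<not> E v u'" "E w u'" using True by blast
  have vs: "w \<in> V" "u' \<in> V" "z \<in> V" using h z A B by auto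
  have "E u' w" "E w v" using sg_sym[OF sg] h vs v by auto
  moreover have "\<not> E u' v" using sg_sym[OF sg] h vs v by auto
  moreover have "\<not> E w z" "\<not> E u' z" using noe h z by auto
  moreover have "distinct [u', w, v, z]" using h z A B AB by auto
  ultimately show ?thesis using c vs v z unfolding cograph_def by blast
next
  case False
  let ?A2 = "{a\<in>A. \<not> E v a}"
  have sg: "simple_graph V E" using c by (simp add: cograph_def)
  have "nosplit V E ?A2" unfolding nosplit_def
  proof (intro conjI)
    show "?A2 \<subseteq> V" using A by auto
    show "?A2 \<noteq> {}" using u by auto
    show "?A2 \<noteq> V" using v A by auto
    show "\<forall>a\<in>?A2. \<forall>b\<in>V - ?A2. \<not> E a b"
    proof (intro ballI)
      fix a b assume a: "a \<in> ?A2" and b: "b \<in> V - ?A2"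
      show "\<not> E a b"
      proof
        assume e: "E a b"
        have "b = v \<or> b \<in> B \<or> (b \<in> A \<and> E v b)" using b cov by auto
        moreover have "a \<in> V" "b \<in> V" using a b A by auto
        ultimately show False using e a False noe sg_sym[OF sg] by blast
      qed
    qed
  qed
  thus ?thesis by blast
qed

lemma core_split:
  assumes c: "cograph V E" and v: "v \<in> V" and A: "A \<subseteq> V - {v}" and ne: "A \<noteq> {}" "V - {v} - A \<noteq> {}"
    and noe: "\<forall>a\<in>A. \<forall>b\<in>V - {v} - A. \<not> E a b"
  shows "(\<exists>A'. nosplit V E A') \<or> (\<exists>A'. nosplit V (compl_graph E) A')"
proof -
  let ?B = "V - {v} - A"
  have sg: "simple_graph V E" using c by (simp add: cograph_def)
  have noe2: "\<forall>b\<in>?B. \<forall>a\<in>A. \<not> E b a" using noe sg_sym[OF sg] A by blast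
  show ?thesis
  proof (cases "\<exists>a\<in>A. E v a")
    case False
    have "nosplit V E A" unfolding nosplit_def
    proof (intro conjI ballI)
      show "A \<subseteq> V" "A \<noteq> {}" "A \<noteq> V" using A ne v by auto
      fix a b assume a: "a \<in> A" and b: "b \<in> V - A"
      show "\<not> E a b"
      proof (cases "b = v")
        case True
        have "\<not> E v a" using False a by blast
        thus ?thesis using True sg_sym[OF sg, of a v] a A v by blast
      next
        case False
        thus ?thesis using noe a b by blast
      qed
    qed
    thus ?thesis by blast
  next
    case TA: True
    show ?thesis
    proof (cases "\<exists>b\<in>?B. E v b")
      case False
      have "nosplit V E ?B" unfolding nosplit_def
      proof (intro conjI ballI)
        show "?B \<subseteq> V" "?B \<noteq> {}" "?B \<noteq> V" using A ne v by auto
        fix a b assume a: "a \<in> ?B" and b: "b \<in> V - ?B"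
        show "\<not> E a b"
        proof (cases "b = v")
          case True
          have "\<not> E v a" using False a by blast
          thus ?thesis using True sg_sym[OF sg, of a v] a A v by blast
        next
          case False
          hence "b \<in> A" using b by blast
          thus ?thesis using noe2 a by blast
        qed
      qed
      thus ?thesis by blast
    next
      case TB: True
      show ?thesis
      proof (cases "\<forall>u\<in>V-{v}. E v u")
        case True
        have "nosplit V (compl_graph E) {v}" using v ne True by (intro nosplit_compl) auto
        thus ?thesis by blast
      next
        case False
        then obtain u where u: "u \<in> V - {v}" "\<not> E v u" by blast
        have cov: "V = A \<union> ?B \<union> {v}" "V = ?B \<union> A \<union> {v}" using v A by auto
        show ?thesis
        proof (cases "u \<in> A")
          case True
          obtain w0 where w0: "w0 \<in> A" "E v w0" using TA by blast
          obtain z where z: "z \<in> ?B" "E v z" using TB by blast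
          have "\<exists>A'. nosplit V E A'"
            by (rule core_split4[OF c v A _ _ noe w0 z True u(2) cov(1)]) auto
          thus ?thesis by blast
        next
          case False
          hence uB: "u \<in> ?B" using u by auto
          obtain w0 where w0: "w0 \<in> A" "E v w0" using TA by blast
          obtain z where z: "z \<in> ?B" "E v z" using TB by blast
          have "\<exists>A'. nosplit V E A'"
            by (rule core_split4[OF c v _ A _ noe2 z w0 uB u(2) cov(2)]) auto
          thus ?thesis by blast
        qed
      qed
    qed
  qed
qed

lemma split_exists:
  "\<forall>V E. cograph V E \<and> card V = n \<and> n \<ge> 2 \<longrightarrow> (\<exists>A. nosplit V E A) \<or> (\<exists>A. nosplit V (compl_graph E) A)"
proof (induction n)
  case 0
  then show ?case by simp
next
  case (Suc n)
  show ?case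
  proof (intro allI impI)
    fix V :: "'a set" and E assume h: "cograph V E \<and> card V = Suc n \<and> 2 \<le> Suc n"
    have sg: "simple_graph V E" using h by (simp add: cograph_def)
    have fin: "finite V" using sg sg_finite by blast
    obtain v where v: "v \<in> V" using h by fastforce
    have cW: "card (V - {v}) = n" using h v fin by simp
    show "(\<exists>A. nosplit V E A) \<or> (\<exists>A. nosplit V (compl_graph E) A)"
    proof (cases "n = 1")
      case True
      then obtain u where u: "V - {v} = {u}" using cW card_1_singletonE by blast
      have uv: "u \<noteq> v" "u \<in> V" using u by auto
      have Vv: "V = {v, u}" using u v by auto
      show ?thesis
      proof (cases "E v u")
        case True
        have "nosplit V (compl_graph E) {v}" using uv Vv True by (intro nosplit_compl) auto
        thus ?thesis by blast
      next
        case False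
        have "nosplit V E {v}" unfolding nosplit_def using uv Vv False by auto
        thus ?thesis by blast
      qed
    next
      case False
      hence n2: "n \<ge> 2" using h by auto
      have cgW: "cograph (V - {v}) E" using h cograph_subset by blast
      have IH: "(\<exists>A. nosplit (V-{v}) E A) \<or> (\<exists>A. nosplit (V-{v}) (compl_graph E) A)"
        using Suc.IH cgW cW n2 by blast
      show ?thesis
      proof (cases "\<exists>A. nosplit (V-{v}) E A")
        case True
        then obtain A where A: "nosplit (V-{v}) E A" by blast
        show ?thesis using core_split[OF _ v, of E A] h A unfolding nosplit_def by auto
      next
        case False
        then obtain A where A: "nosplit (V-{v}) (compl_graph E) A" using IH by blast
        have cc: "cograph V (compl_graph E)" using h cograph_compl by blast
        have r: "(\<exists>A'. nosplit V (compl_graph E) A') \<or> (\<exists>A'. nosplit V (compl_graph (compl_graph E)) A')"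
          using core_split[OF cc v, of A] A unfolding nosplit_def by auto
        have "nosplit V E A'" if nA: "nosplit V (compl_graph (compl_graph E)) A'" for A'
        proof -
          have "\<forall>a\<in>A'. \<forall>b\<in>V - A'. \<not> E a b"
          proof (intro ballI)
            fix a b assume "a \<in> A'" "b \<in> V - A'"
            moreover hence "a \<noteq> b" by auto
            ultimately show "\<not> E a b" using nA unfolding nosplit_def compl_graph_def by blast
          qed
          thus ?thesis using nA unfolding nosplit_def by blast
        qed
        thus ?thesis using r by blast
      qed
    qed
  qed
qed



definition gf :: "nat \<Rightarrow> nat \<Rightarrow> nat \<Rightarrow> nat" where
  "gf m x y = (x div m) * y + (x mod m) * (y div m)"

lemma gf_expand:
  assumes "m > 0"
  shows "gf m x y = (x div m) * (y div m) * m + (x div m) * (y mod m) + (x mod m) * (y div m)"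
proof -
  have "(x div m) * y = (x div m) * (y div m) * m + (x div m) * (y mod m)"
    by (metis add_mult_distrib2 div_mult_mod_eq mult.assoc)
  thus ?thesis unfolding gf_def by simp
qed

lemma gf_sym: "m > 0 \<Longrightarrow> gf m x y = gf m y x"
  using gf_expand[of m x y] gf_expand[of m y x] by (simp add: algebra_simps)

lemma gf_mono2: "y1 \<le> y2 \<Longrightarrow> gf m x y1 \<le> gf m x y2"
  unfolding gf_def by (intro add_mono mult_le_mono div_le_mono) auto

lemma gf_super: "gf m x y1 + gf m x y2 \<le> gf m x (y1 + y2)"
proof -
  have "(y1 + y2) div m = y1 div m + y2 div m + (y1 mod m + y2 mod m) div m" by (rule div_add1_eq)
  hence h: "y1 div m + y2 div m \<le> (y1 + y2) div m" by linarith
  have e: "(x mod m) * (y1 div m) + (x mod m) * (y2 div m) = (x mod m) * (y1 div m + y2 div m)"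
    by (simp add: add_mult_distrib2)
  have "(x mod m) * (y1 div m + y2 div m) \<le> (x mod m) * ((y1 + y2) div m)"
    using h by (rule mult_le_mono2)
  hence i: "(x mod m) * (y1 div m) + (x mod m) * (y2 div m) \<le> (x mod m) * ((y1 + y2) div m)"
    using e by simp
  have "gf m x y1 + gf m x y2 = (x div m) * (y1 + y2) + ((x mod m) * (y1 div m) + (x mod m) * (y2 div m))"
    unfolding gf_def by (simp add: add_mult_distrib2)
  also have "\<dots> \<le> (x div m) * (y1 + y2) + (x mod m) * ((y1 + y2) div m)" using i by simp
  finally show ?thesis unfolding gf_def .
qed

lemma gf_ge: "0 < m \<Longrightarrow> m \<le> x \<Longrightarrow> y \<le> gf m x y"
proof -
  assume "0 < m" "m \<le> x"
  hence "1 \<le> x div m" using div_le_mono[of m x m] by simp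
  hence h: "y \<le> (x div m) * y" by simp
  show ?thesis unfolding gf_def by (rule le_trans[OF h]) simp
qed

lemma gf_formula:
  assumes "m > 0"
  shows "(x * y - (x mod m) * (y mod m)) div m = gf m x y"
proof -
  obtain a b r s where d: "a = x div m" "b = y div m" "r = x mod m" "s = y mod m" by blast
  have x: "x = a * m + r" and y: "y = b * m + s" unfolding d by simp_all
  have g: "gf m x y = a * b * m + a * s + r * b" using gf_expand[OF assms, of x y] unfolding d by simp
  have "x * y = (a*m+r)*(b*m+s)" using x y by simp
  also have "\<dots> = m * (a * b * m + a * s + r * b) + r * s" by (simp add: algebra_simps)
  finally have "x * y - r * s = m * gf m x y" using g by simp
  thus ?thesis using assms d by simp
qed

lemma union_step:
  fixes V :: "'a set"
  assumes IH: "\<forall>V' (E'::'a \<Rightarrow> 'a \<Rightarrow> bool) x' y'. card V' < card V \<and> cograph V' E' \<and> k+1 \<le> x' \<and> k+1 \<le> y' \<and>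
        (\<forall>S\<subseteq>V'. k_dense k E' S \<longrightarrow> card S \<le> x') \<and> (\<forall>S\<subseteq>V'. k_sparse k E' S \<longrightarrow> card S \<le> y')
        \<longrightarrow> card V' \<le> gf (k+1) x' y'"
    and c: "cograph V E" and x: "k+1 \<le> x" and y: "k+1 \<le> y"
    and D: "\<forall>S\<subseteq>V. k_dense k E S \<longrightarrow> card S \<le> x" and Sp: "\<forall>S\<subseteq>V. k_sparse k E S \<longrightarrow> card S \<le> y"
    and ns: "nosplit V E A"
  shows "card V \<le> gf (k+1) x y"
proof -
  have sg: "simple_graph V E" using c by (simp add: cograph_def)
  have fin: "finite V" using sg sg_finite by blast
  define B where "B = V - A"
  have A: "A \<subseteq> V" "A \<noteq> {}" "B \<noteq> {}" "B \<subseteq> V" "A \<inter> B = {}" "V = A \<union> B"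
    using ns unfolding nosplit_def B_def by auto
  have noe: "\<forall>a\<in>A. \<forall>b\<in>B. \<not> E a b" using ns unfolding nosplit_def B_def by auto
  have noe2: "\<forall>b\<in>B. \<forall>a\<in>A. \<not> E b a" using noe sg_sym[OF sg] A by blast
  have finA: "finite A" "finite B" using fin A finite_subset by blast+
  have "A \<subset> V" using A by blast
  hence cA: "card A < card V" using fin by (rule psubset_card_mono[rotated])
  have "B \<subset> V" using A B_def by blast
  hence cB: "card B < card V" using fin by (rule psubset_card_mono[rotated])
  have part: "\<And>P. P \<subseteq> V \<Longrightarrow> P \<noteq> {} \<Longrightarrow> card P < card V \<Longrightarrow>
     (\<exists>yP S. S \<subseteq> P \<and> k_sparse k E S \<and> card S = yP \<and> card P \<le> gf (k+1) x yP)"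
  proof -
    fix P assume P: "P \<subseteq> V" "P \<noteq> {}" "card P < card V"
    have finP: "finite P" using P fin finite_subset by blast
    let ?C = "{card S | S. S \<subseteq> P \<and> k_sparse k E S}"
    have Cfin: "finite ?C"
    proof (rule finite_subset[of _ "{..card P}"])
      show "?C \<subseteq> {..card P}" using finP card_mono by fastforce
    qed simp
    have "(0::nat) \<in> ?C" by (rule CollectI, rule exI[of _ "{}"]) (simp add: k_sparse_def)
    hence Cne: "?C \<noteq> {}" by blast
    define yP where "yP = Max ?C"
    have "yP \<in> ?C" unfolding yP_def by (rule Max_in[OF Cfin Cne])
    then obtain S where S: "S \<subseteq> P" "k_sparse k E S" "card S = yP" by blast
    have yPmax: "card T \<le> yP" if "T \<subseteq> P" "k_sparse k E T" for T
    proof -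
      have "card T \<in> ?C" using that by blast
      thus ?thesis unfolding yP_def by (rule Max_ge[OF Cfin])
    qed
    have "card P \<le> gf (k+1) x yP"
    proof (cases "card P \<le> k + 1")
      case True
      have "k_sparse k E P" using small_sparse[OF sg P(1) True] .
      hence "card P \<le> yP" using yPmax by blast
      also have "yP \<le> gf (k+1) x yP" using x by (intro gf_ge) auto
      finally show ?thesis .
    next
      case False
      hence "k + 1 \<le> card P" by simp
      then obtain T where T: "T \<subseteq> P" "card T = k + 1"
        by (rule obtain_subset_with_card_n)
      have TV: "T \<subseteq> V" using T P by blast
      have "k_sparse k E T" using small_sparse[OF sg TV] T by simp
      hence "card T \<le> yP" using yPmax T by blast
      hence yk: "k + 1 \<le> yP" using T by simp
      show ?thesis
      proof (rule IH[rule_format], intro conjI)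
        show "card P < card V" by fact
        show "cograph P E" using c P cograph_subset by blast
        show "k + 1 \<le> x" by fact
        show "k + 1 \<le> yP" by fact
        show "\<forall>S\<subseteq>P. k_dense k E S \<longrightarrow> card S \<le> x" using D P by blast
        show "\<forall>S\<subseteq>P. k_sparse k E S \<longrightarrow> card S \<le> yP" using yPmax by blast
      qed
    qed
    thus "\<exists>yP S. S \<subseteq> P \<and> k_sparse k E S \<and> card S = yP \<and> card P \<le> gf (k+1) x yP" using S by blast
  qed
  obtain y1 S1 where S1: "S1 \<subseteq> A" "k_sparse k E S1" "card S1 = y1" "card A \<le> gf (k+1) x y1"
    using part[OF A(1) A(2) cA] by blast
  obtain y2 S2 where S2: "S2 \<subseteq> B" "k_sparse k E S2" "card S2 = y2" "card B \<le> gf (k+1) x y2"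
    using part[OF A(4) A(3) cB] by blast
  have "k_sparse k E (S1 \<union> S2)" unfolding k_sparse_def
  proof
    fix v assume v: "v \<in> S1 \<union> S2"
    show "card {u \<in> S1 \<union> S2. E v u} \<le> k"
    proof (cases "v \<in> S1")
      case True
      have "{u \<in> S1 \<union> S2. E v u} = {u \<in> S1. E v u}" using True noe S1 S2 by auto
      thus ?thesis using S1(2) True unfolding k_sparse_def by simp
    next
      case False
      hence vS2: "v \<in> S2" using v by auto
      have "{u \<in> S1 \<union> S2. E v u} = {u \<in> S2. E v u}" using vS2 noe2 S1 S2 by auto
      thus ?thesis using S2(2) vS2 unfolding k_sparse_def by simp
    qed
  qed
  moreover have "S1 \<union> S2 \<subseteq> V" using S1 S2 A by auto
  ultimately have "card (S1 \<union> S2) \<le> y" using Sp by blast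
  moreover have "card (S1 \<union> S2) = y1 + y2"
  proof -
    have "finite S1" "finite S2" using S1(1) S2(1) finA finite_subset by blast+
    moreover have "S1 \<inter> S2 = {}" using S1(1) S2(1) A(5) by blast
    ultimately show ?thesis using S1(3) S2(3) by (simp add: card_Un_disjoint)
  qed
  ultimately have yy: "y1 + y2 \<le> y" by simp
  have "card V = card A + card B" using A(5,6) finA by (simp add: card_Un_disjoint)
  also have "\<dots> \<le> gf (k+1) x y1 + gf (k+1) x y2" using S1 S2 by simp
  also have "\<dots> \<le> gf (k+1) x (y1 + y2)" by (rule gf_super)
  also have "\<dots> \<le> gf (k+1) x y" using yy by (rule gf_mono2)
  finally show ?thesis .
qed



lemma UB:
  "\<forall>V (E::'a\<Rightarrow>'a\<Rightarrow>bool) x y. card V = n \<and> cograph V E \<and> k+1 \<le> x \<and> k+1 \<le> y \<and>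
     (\<forall>S\<subseteq>V. k_dense k E S \<longrightarrow> card S \<le> x) \<and> (\<forall>S\<subseteq>V. k_sparse k E S \<longrightarrow> card S \<le> y)
     \<longrightarrow> n \<le> gf (k+1) x y"
proof (induction n rule: less_induct)
  case (less n)
  show ?case
  proof (intro allI impI)
    fix V :: "'a set" and E x y
    assume h: "card V = n \<and> cograph V E \<and> k+1 \<le> x \<and> k+1 \<le> y \<and>
     (\<forall>S\<subseteq>V. k_dense k E S \<longrightarrow> card S \<le> x) \<and> (\<forall>S\<subseteq>V. k_sparse k E S \<longrightarrow> card S \<le> y)"
    have IH: "\<forall>V' (E'::'a \<Rightarrow> 'a \<Rightarrow> bool) x' y'. card V' < card V \<and> cograph V' E' \<and> k+1 \<le> x' \<and> k+1 \<le> y' \<and>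
        (\<forall>S\<subseteq>V'. k_dense k E' S \<longrightarrow> card S \<le> x') \<and> (\<forall>S\<subseteq>V'. k_sparse k E' S \<longrightarrow> card S \<le> y')
        \<longrightarrow> card V' \<le> gf (k+1) x' y'"
    proof (intro allI impI)
      fix V' :: "'a set" and E' :: "'a \<Rightarrow> 'a \<Rightarrow> bool" and x' y'
      assume a: "card V' < card V \<and> cograph V' E' \<and> k+1 \<le> x' \<and> k+1 \<le> y' \<and>
        (\<forall>S\<subseteq>V'. k_dense k E' S \<longrightarrow> card S \<le> x') \<and> (\<forall>S\<subseteq>V'. k_sparse k E' S \<longrightarrow> card S \<le> y')"
      have lt: "card V' < n" using a h by simp
      show "card V' \<le> gf (k+1) x' y'"
        using less.IH[OF lt, rule_format, of V' E' x' y'] a by simp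
    qed
    have c: "cograph V E" and x: "k+1 \<le> x" and y: "k+1 \<le> y"
      and D: "\<forall>S\<subseteq>V. k_dense k E S \<longrightarrow> card S \<le> x" and Sp: "\<forall>S\<subseteq>V. k_sparse k E S \<longrightarrow> card S \<le> y"
      using h by blast+
    have sg: "simple_graph V E" using c by (simp add: cograph_def)
    show "n \<le> gf (k+1) x y"
    proof (cases "n \<le> 1")
      case True
      have "y \<le> gf (k+1) x y" using x by (intro gf_ge) auto
      thus ?thesis using True y by linarith
    next
      case False
      hence "(\<exists>A. nosplit V E A) \<or> (\<exists>A. nosplit V (compl_graph E) A)"
        using split_exists[of n, rule_format, of V E] h by simp
      thus ?thesis
      proof
        assume "\<exists>A. nosplit V E A"
        then obtain A where A: "nosplit V E A" by blast
        show ?thesis using union_step[OF IH c x y D Sp A] h by simp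
      next
        assume "\<exists>A. nosplit V (compl_graph E) A"
        then obtain A where A: "nosplit V (compl_graph E) A" by blast
        have c': "cograph V (compl_graph E)" using c by (rule cograph_compl)
        have D': "\<forall>S\<subseteq>V. k_dense k (compl_graph E) S \<longrightarrow> card S \<le> y"
          using Sp compl_compl_sparse[OF sg] by blast
        have Sp': "\<forall>S\<subseteq>V. k_sparse k (compl_graph E) S \<longrightarrow> card S \<le> x"
          using D unfolding k_dense_def by blast
        have "card V \<le> gf (k+1) y x" using union_step[OF IH c' y x D' Sp' A] .
        thus ?thesis using h gf_sym[of "k+1" y x] by simp
      qed
    qed
  qed
qed



definition cV :: "nat \<Rightarrow> nat \<Rightarrow> nat \<Rightarrow> nat \<Rightarrow> nat \<Rightarrow> (nat \<times> nat \<times> nat) set" where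
  "cV m a r b s = ({0} \<times> ({..<b-1} \<times> {..<a*m+r})) \<union> ({1} \<times> ({0} \<times> {..<r}))
      \<union> ({2} \<times> ({..<a} \<times> {..<s})) \<union> ({3} \<times> ({..<a} \<times> {..<m}))"

definition cE :: "nat \<times> nat \<times> nat \<Rightarrow> nat \<times> nat \<times> nat \<Rightarrow> bool" where
  "cE p q \<longleftrightarrow> p \<noteq> q \<and> ((fst p = 0 \<and> fst q = 0 \<and> fst (snd p) = fst (snd q)) \<or>
     (fst p \<noteq> 0 \<and> fst q \<noteq> 0 \<and> (fst p = 1 \<or> fst q = 1 \<or> fst (snd p) \<noteq> fst (snd q) \<or> (fst p = 3 \<and> fst q = 3))))"

lemma cV_finite: "finite (cV m a r b s)" unfolding cV_def by auto

lemma cE_noP4: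
  assumes d: "distinct [p,q,u,w]" and e: "cE p q" "cE q u" "cE u w" and n: "\<not> cE p u" "\<not> cE q w" "\<not> cE p w"
  shows False
proof (cases "fst p = 0")
  case True
  have "fst q = 0 \<and> fst (snd p) = fst (snd q)" using e(1) True unfolding cE_def by auto
  moreover have "fst u = 0 \<and> fst (snd q) = fst (snd u)" using e(2) calculation unfolding cE_def by auto
  ultimately have "cE p u" using True d unfolding cE_def by auto
  thus False using n by simp
next
  case False
  have q0: "fst q \<noteq> 0" using e(1) False unfolding cE_def by auto
  have u0: "fst u \<noteq> 0" using e(2) q0 unfolding cE_def by auto
  have w0: "fst w \<noteq> 0" using e(3) u0 unfolding cE_def by auto
  have pu: "fst p \<noteq> 1 \<and> fst u \<noteq> 1 \<and> fst (snd p) = fst (snd u) \<and> \<not> (fst p = 3 \<and> fst u = 3)"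
    using n(1) d False u0 unfolding cE_def by auto
  have qw: "fst q \<noteq> 1 \<and> fst (snd q) = fst (snd w)" using n(2) d q0 w0 unfolding cE_def by auto
  have pw: "fst (snd p) = fst (snd w)" using n(3) d False w0 unfolding cE_def by auto
  have "fst p = 3 \<and> fst q = 3" using e(1) pu qw pw False q0 unfolding cE_def by auto
  moreover have "fst u = 3" using e(2) pu qw pw q0 u0 unfolding cE_def by auto
  ultimately show False using pu by simp
qed

lemma cE_cograph: "cograph (cV m a r b s) cE"
proof -
  have "simple_graph (cV m a r b s) cE" unfolding simple_graph_def using cV_finite
    by (auto simp: cE_def)
  thus ?thesis unfolding cograph_def using cE_noP4 by blast
qed



lemma cV_mem: "p \<in> cV m a r b s \<longleftrightarrow>
   (fst p = 0 \<and> fst (snd p) < b - 1 \<and> snd (snd p) < a*m+r) \<or>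
   (fst p = 1 \<and> fst (snd p) = 0 \<and> snd (snd p) < r) \<or>
   (fst p = 2 \<and> fst (snd p) < a \<and> snd (snd p) < s) \<or>
   (fst p = 3 \<and> fst (snd p) < a \<and> snd (snd p) < m)"
  unfolding cV_def by (cases p) auto

lemma card_triple: "card ({t} \<times> ({g} \<times> {..<n})) = (n::nat)"
  by (simp add: card_cartesian_product)

lemma dense_bound:
  assumes S: "S \<subseteq> cV m a r b s" and D: "k_dense k cE S" and m: "m = k + 1"
    and ab: "b \<le> 1 \<or> 2 * k \<le> a * m + r"
  shows "card S \<le> a * m + r"
proof -
  have finS: "finite S" using S cV_finite finite_subset by blast
  show ?thesis
  proof (cases "\<exists>v\<in>S. fst v = 0")
    case True
    then obtain v where v: "v \<in> S" "fst v = 0" by blast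
    define c where "c = fst (snd v)"
    define C where "C = {p\<in>S. fst p = 0 \<and> fst (snd p) = c}"
    have vC: "v \<in> C" unfolding C_def c_def using v by simp
    have b2: "2 \<le> b" using v S cV_mem[of v m a r b s] by auto
    have c1: "card (S - C) \<le> k"
    proof (rule nonnbr_bound[OF D v(1) _ _ finS])
      show "S - C \<subseteq> S" by blast
      show "\<forall>u\<in>S - C. u \<noteq> v \<and> \<not> cE v u"
      proof
        fix u :: "nat \<times> nat \<times> nat" assume u: "u \<in> S - C"
        hence "u \<noteq> v" using vC by blast
        moreover have "\<not>(fst u = 0 \<and> fst (snd u) = c)" using u unfolding C_def by blast
        ultimately show "u \<noteq> v \<and> \<not> cE v u" using v(2) unfolding cE_def c_def by auto
      qed
    qed
    show ?thesis
    proof (cases "S - C = {}")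
      case True
      have "S \<subseteq> {0} \<times> ({c} \<times> {..<a*m+r})"
      proof
        fix p :: "nat \<times> nat \<times> nat" assume p: "p \<in> S"
        have 1: "fst p = 0" "fst (snd p) = c" using True p unfolding C_def by auto
        have "p \<in> cV m a r b s" using S p by blast
        hence "snd (snd p) < a*m+r" using 1 unfolding cV_mem by auto
        thus "p \<in> {0} \<times> ({c} \<times> {..<a*m+r})" using 1 by (cases p) auto
      qed
      hence "card S \<le> card ({0::nat} \<times> ({c} \<times> {..<a*m+r}))" by (intro card_mono) auto
      thus ?thesis by (simp add: card_triple)
    next
      case False
      then obtain w where w: "w \<in> S" "w \<notin> C" by blast
      have c2: "card C \<le> k"
      proof (rule nonnbr_bound[OF D w(1) _ _ finS])
        show "C \<subseteq> S" unfolding C_def by blast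
        show "\<forall>u\<in>C. u \<noteq> w \<and> \<not> cE w u"
        proof
          fix u :: "nat \<times> nat \<times> nat" assume u: "u \<in> C"
          hence "u \<noteq> w" using w by blast
          moreover have "fst u = 0" "fst (snd u) = c" using u unfolding C_def by auto
          moreover have "\<not>(fst w = 0 \<and> fst (snd w) = c)" using w unfolding C_def by blast
          ultimately show "u \<noteq> w \<and> \<not> cE w u" unfolding cE_def by auto
        qed
      qed
      have "S = C \<union> (S - C)" unfolding C_def by blast
      hence "card S \<le> card C + card (S - C)" using card_Un_le[of C "S - C"] by simp
      thus ?thesis using c1 c2 ab b2 by linarith
    qed
  next
    case False
    define Gr where "Gr g = {p\<in>S. fst (snd p) = g \<and> fst p \<noteq> 1}" for g
    define Hb where "Hb = {p\<in>S. fst p = 1}"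
    have cover: "S \<subseteq> Hb \<union> (\<Union>g\<in>{..<a}. Gr g)"
    proof
      fix p :: "nat \<times> nat \<times> nat" assume p: "p \<in> S"
      have f0: "fst p \<noteq> 0" using False p by auto
      have "p \<in> cV m a r b s" using S p by blast
      hence "fst p = 1 \<or> (fst p \<noteq> 1 \<and> fst (snd p) < a)" using f0 unfolding cV_mem by auto
      thus "p \<in> Hb \<union> (\<Union>g\<in>{..<a}. Gr g)" using p unfolding Hb_def Gr_def by auto
    qed
    have hb: "card Hb \<le> r"
    proof -
      have "Hb \<subseteq> {1} \<times> ({0} \<times> {..<r})"
      proof
        fix p :: "nat \<times> nat \<times> nat" assume p: "p \<in> Hb"
        hence 1: "fst p = 1" "p \<in> cV m a r b s" using S unfolding Hb_def by auto
        hence "fst (snd p) = 0 \<and> snd (snd p) < r" unfolding cV_mem by auto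
        thus "p \<in> {1} \<times> ({0} \<times> {..<r})" using 1 by (cases p) auto
      qed
      hence "card Hb \<le> card ({1::nat} \<times> ({0::nat} \<times> {..<r}))" by (intro card_mono) auto
      thus ?thesis by (simp add: card_triple)
    qed
    have gr: "card (Gr g) \<le> m" for g
    proof (cases "\<exists>v\<in>Gr g. fst v = 2")
      case True
      then obtain v where v: "v \<in> Gr g" "fst v = 2" by blast
      have vS: "v \<in> S" using v unfolding Gr_def by blast
      have "card (Gr g - {v}) \<le> k"
      proof (rule nonnbr_bound[OF D vS _ _ finS])
        show "Gr g - {v} \<subseteq> S" unfolding Gr_def by blast
        show "\<forall>u\<in>Gr g - {v}. u \<noteq> v \<and> \<not> cE v u"
        proof
          fix u :: "nat \<times> nat \<times> nat" assume u: "u \<in> Gr g - {v}"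
          have uS: "u \<in> S" using u unfolding Gr_def by blast
          have "fst u \<noteq> 0" using uS False by simp
          moreover have "fst u \<noteq> 1" "fst (snd u) = g" using u unfolding Gr_def by auto
          moreover have "fst (snd v) = g" using v unfolding Gr_def by auto
          ultimately show "u \<noteq> v \<and> \<not> cE v u" using u v(2) unfolding cE_def by auto
        qed
      qed
      moreover have "finite (Gr g)" using finS unfolding Gr_def by auto
      ultimately show ?thesis using v m by (simp add: card_Diff_singleton)
    next
      case F2: False
      have "Gr g \<subseteq> {3} \<times> ({g} \<times> {..<m})"
      proof
        fix p :: "nat \<times> nat \<times> nat" assume p: "p \<in> Gr g"
        have p2: "fst p \<noteq> 2"
        proof
          assume "fst p = 2"
          hence "\<exists>v\<in>Gr g. fst v = 2" using p by (intro bexI)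
          thus False using F2 by contradiction
        qed
        have pS: "p \<in> S" using p unfolding Gr_def by blast
        have 1: "fst p \<noteq> 0" "fst p \<noteq> 2" "fst p \<noteq> 1" "fst (snd p) = g" "p \<in> cV m a r b s"
          using pS False p2 p S unfolding Gr_def by auto
        hence "fst p = 3 \<and> snd (snd p) < m" unfolding cV_mem by auto
        thus "p \<in> {3} \<times> ({g} \<times> {..<m})" using 1 by (cases p) auto
      qed
      hence "card (Gr g) \<le> card ({3::nat} \<times> ({g} \<times> {..<m}))" by (intro card_mono) auto
      thus ?thesis by (simp add: card_triple)
    qed
    have "card S \<le> card (Hb \<union> (\<Union>g\<in>{..<a}. Gr g))"
      using cover finS Hb_def Gr_def by (intro card_mono) auto
    also have "\<dots> \<le> card Hb + card (\<Union>g\<in>{..<a}. Gr g)" by (rule card_Un_le)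
    also have "card (\<Union>g\<in>{..<a}. Gr g) \<le> (\<Sum>g<a. card (Gr g))" by (rule card_UN_le) simp
    also have "(\<Sum>g<a. card (Gr g)) \<le> (\<Sum>g<a. m)" by (rule sum_mono) (rule gr)
    finally show ?thesis using hb by (simp add: algebra_simps)
  qed
qed



lemma sparse_bound:
  assumes S: "S \<subseteq> cV m a r b s" and Sp: "k_sparse k cE S" and m: "m = k + 1" and b: "1 \<le> b"
  shows "card S \<le> b * m + s"
proof -
  have finS: "finite S" using S cV_finite finite_subset by blast
  define Cl where "Cl c = {p\<in>S. fst p = 0 \<and> fst (snd p) = c}" for c
  define HS where "HS = {p\<in>S. fst p \<noteq> 0}"
  have cover: "S \<subseteq> (\<Union>c\<in>{..<b-1}. Cl c) \<union> HS"
  proof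
    fix p :: "nat \<times> nat \<times> nat" assume p: "p \<in> S"
    have "p \<in> cV m a r b s" using S p by blast
    hence "fst p = 0 \<longrightarrow> fst (snd p) < b - 1" unfolding cV_mem by auto
    thus "p \<in> (\<Union>c\<in>{..<b-1}. Cl c) \<union> HS" using p unfolding Cl_def HS_def by auto
  qed
  have cl: "card (Cl c) \<le> m" for c
  proof (cases "Cl c = {}")
    case True thus ?thesis by simp
  next
    case False
    then obtain v where v: "v \<in> Cl c" by blast
    have vS: "v \<in> S" using v unfolding Cl_def by blast
    have "card (Cl c - {v}) \<le> k"
    proof (rule nbr_bound[OF Sp vS _ _ finS])
      show "Cl c - {v} \<subseteq> S" unfolding Cl_def by blast
      show "\<forall>u\<in>Cl c - {v}. cE v u"
      proof
        fix u :: "nat \<times> nat \<times> nat" assume u: "u \<in> Cl c - {v}"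
        have "fst u = 0" "fst (snd u) = c" "u \<noteq> v" using u unfolding Cl_def by auto
        moreover have "fst v = 0" "fst (snd v) = c" using v unfolding Cl_def by auto
        ultimately show "cE v u" unfolding cE_def by auto
      qed
    qed
    moreover have "finite (Cl c)" using finS unfolding Cl_def by auto
    ultimately show ?thesis using v m by (simp add: card_Diff_singleton)
  qed
  have finHS: "finite HS" using finS unfolding HS_def by auto
  have HSS: "HS \<subseteq> S" unfolding HS_def by blast
  have hs: "card HS \<le> m + s"
  proof (cases "\<exists>h\<in>HS. fst h = 1")
    case True
    then obtain h where h: "h \<in> HS" "fst h = 1" by blast
    have "card (HS - {h}) \<le> k"
    proof (rule nbr_bound[OF Sp _ _ _ finS])
      show "h \<in> S" using h HSS by blast
      show "HS - {h} \<subseteq> S" using HSS by blast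
      show "\<forall>u\<in>HS - {h}. cE h u"
      proof
        fix u :: "nat \<times> nat \<times> nat" assume u: "u \<in> HS - {h}"
        have "fst u \<noteq> 0" "u \<noteq> h" using u unfolding HS_def by auto
        thus "cE h u" using h(2) unfolding cE_def by auto
      qed
    qed
    thus ?thesis using h finHS m by (simp add: card_Diff_singleton)
  next
    case nohub: False
    show ?thesis
    proof (cases "HS = {}")
      case True thus ?thesis by simp
    next
      case False
      obtain v where v: "v \<in> HS" "fst v = 3 \<or> (\<forall>w\<in>HS. fst w \<noteq> 3)"
      proof (cases "\<exists>w\<in>HS. fst w = 3")
        case True thus ?thesis using that by blast
      next
        case F3: False
        obtain v where "v \<in> HS" using False by blast
        thus ?thesis using that F3 by blast
      qed
      define g where "g = fst (snd v)"
      define Ig where "Ig = {2::nat} \<times> ({g} \<times> {..<s})"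
      have vS: "v \<in> S" using v HSS by blast
      have T: "card (HS - {v} - Ig) \<le> k"
      proof (rule nbr_bound[OF Sp vS _ _ finS])
        show "HS - {v} - Ig \<subseteq> S" using HSS by blast
        show "\<forall>u\<in>HS - {v} - Ig. cE v u"
        proof
          fix u :: "nat \<times> nat \<times> nat" assume u: "u \<in> HS - {v} - Ig"
          have uS: "u \<in> S" and u0: "fst u \<noteq> 0" and uv: "u \<noteq> v" and uI: "u \<notin> Ig"
            using u unfolding HS_def by auto
          have u1: "fst u \<noteq> 1" using nohub u by auto
          have v0: "fst v \<noteq> 0" using v unfolding HS_def by auto
          have v1: "fst v \<noteq> 1"
          proof
            assume "fst v = 1"
            hence "\<exists>h\<in>HS. fst h = 1" using v(1) by (intro bexI)
            thus False using nohub by contradiction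
          qed
          have "u \<in> cV m a r b s" using uS S by blast
          hence ut: "(fst u = 2 \<and> snd (snd u) < s) \<or> fst u = 3" using u0 u1 unfolding cV_mem by auto
          show "cE v u"
          proof (cases "fst u = 3")
            case True
            hence "fst v = 3" using v u by auto
            thus ?thesis using True uv unfolding cE_def by auto
          next
            case False
            hence "fst u = 2" "snd (snd u) < s" using ut by auto
            hence "fst (snd u) \<noteq> g" using uI unfolding Ig_def by (cases u) auto
            thus ?thesis using u0 v0 uv unfolding cE_def g_def by auto
          qed
        qed
      qed
      have "HS \<subseteq> (HS - {v} - Ig) \<union> insert v Ig" by blast
      hence "card HS \<le> card ((HS - {v} - Ig) \<union> insert v Ig)"
        by (intro card_mono) (auto simp: Ig_def finHS)
      also have "\<dots> \<le> card (HS - {v} - Ig) + card (insert v Ig)" by (rule card_Un_le)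
      also have "card (insert v Ig) \<le> Suc (card Ig)" by (rule card_insert_le_m1) auto
      also have "card Ig = s" unfolding Ig_def by (simp add: card_cartesian_product)
      finally show ?thesis using T m by simp
    qed
  qed
  have "card S \<le> card ((\<Union>c\<in>{..<b-1}. Cl c) \<union> HS)"
    using cover finS finHS by (intro card_mono) (auto simp: Cl_def)
  also have "\<dots> \<le> card (\<Union>c\<in>{..<b-1}. Cl c) + card HS" by (rule card_Un_le)
  also have "card (\<Union>c\<in>{..<b-1}. Cl c) \<le> (\<Sum>c<b-1. card (Cl c))" by (rule card_UN_le) simp
  also have "(\<Sum>c<b-1. card (Cl c)) \<le> (\<Sum>c<b-1. m)" by (rule sum_mono) (rule cl)
  finally have "card S \<le> (b - 1) * m + (m + s)" using hs by simp
  also have "\<dots> = b * m + s" using b by (cases b) (auto simp: algebra_simps)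
  finally show ?thesis .
qed

lemma cV_card: "card (cV m a r b s) = (b-1)*(a*m+r) + r + a*s + a*m"
proof -
  let ?A = "{0::nat} \<times> ({..<b-1} \<times> {..<a*m+r})" and ?B = "{1::nat} \<times> ({0::nat} \<times> {..<r})"
    and ?C = "{2::nat} \<times> ({..<a} \<times> {..<s})" and ?D = "{3::nat} \<times> ({..<a} \<times> {..<m})"
  have "card (?A \<union> ?B \<union> ?C \<union> ?D) = card (?A \<union> ?B \<union> ?C) + card ?D"
    by (rule card_Un_disjoint) auto
  also have "card (?A \<union> ?B \<union> ?C) = card (?A \<union> ?B) + card ?C"
    by (rule card_Un_disjoint) auto
  also have "card (?A \<union> ?B) = card ?A + card ?B"
    by (rule card_Un_disjoint) auto
  finally show ?thesis unfolding cV_def by (simp add: card_cartesian_product)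
qed



lemma LB0:
  assumes m: "m = k + 1" and x: "m \<le> x" and y: "m \<le> y" and ab: "2 \<le> x div m \<or> y div m = 1"
  shows "\<exists>(V :: (nat \<times> nat \<times> nat) set) E. cograph V E \<and> card V = gf m x y \<and>
     (\<forall>S\<subseteq>V. k_dense k E S \<longrightarrow> card S \<le> x) \<and> (\<forall>S\<subseteq>V. k_sparse k E S \<longrightarrow> card S \<le> y)"
proof -
  define a r b s where "a = x div m" "r = x mod m" "b = y div m" "s = y mod m"
  have xe: "x = a * m + r" and ye: "y = b * m + s" unfolding a_r_b_s_def by simp_all
  have mpos: "0 < m" using m by simp
  have b1: "1 \<le> b" using y mpos unfolding a_r_b_s_def using div_le_mono[of m y m] by simp
  have ab': "b \<le> 1 \<or> 2 * k \<le> a * m + r"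
  proof (cases "2 \<le> a")
    case True
    hence "2 * m \<le> a * m" by simp
    thus ?thesis using m by simp
  next
    case False thus ?thesis using ab unfolding a_r_b_s_def by simp
  qed
  let ?V = "cV m a r b s"
  have "cograph ?V cE" by (rule cE_cograph)
  moreover have "card ?V = gf m x y"
  proof -
    have g: "gf m x y = a * y + r * b" unfolding gf_def a_r_b_s_def by simp
    obtain b' where b': "b = Suc b'" using b1 by (cases b) auto
    have "card ?V = (b-1)*(a*m+r) + r + a*s + a*m" by (rule cV_card)
    also have "\<dots> = a * (b * m + s) + r * b" unfolding b' by (simp add: algebra_simps)
    also have "\<dots> = gf m x y" using g ye by simp
    finally show ?thesis .
  qed
  moreover have "\<forall>S\<subseteq>?V. k_dense k cE S \<longrightarrow> card S \<le> x"
    using dense_bound[OF _ _ m ab'] xe by simp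
  moreover have "\<forall>S\<subseteq>?V. k_sparse k cE S \<longrightarrow> card S \<le> y"
    using sparse_bound[OF _ _ m b1] ye by simp
  ultimately show ?thesis by blast
qed

lemma LB:
  assumes m: "m = k + 1" and x: "m \<le> x" and y: "m \<le> y"
  shows "\<exists>(V :: (nat \<times> nat \<times> nat) set) E. cograph V E \<and> card V = gf m x y \<and>
     (\<forall>S\<subseteq>V. k_dense k E S \<longrightarrow> card S \<le> x) \<and> (\<forall>S\<subseteq>V. k_sparse k E S \<longrightarrow> card S \<le> y)"
proof (cases "2 \<le> x div m \<or> y div m = 1")
  case True thus ?thesis using LB0[OF m x y] by blast
next
  case False
  have mpos: "0 < m" using m by simp
  have "1 \<le> y div m" using y mpos div_le_mono[of m y m] by simp
  hence "2 \<le> y div m" using False by simp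
  then obtain V :: "(nat \<times> nat \<times> nat) set" and E where V: "cograph V E" "card V = gf m y x"
    "\<forall>S\<subseteq>V. k_dense k E S \<longrightarrow> card S \<le> y" "\<forall>S\<subseteq>V. k_sparse k E S \<longrightarrow> card S \<le> x"
    using LB0[OF m y x] by blast
  have sg: "simple_graph V E" using V(1) by (simp add: cograph_def)
  have "cograph V (compl_graph E)" using V(1) by (rule cograph_compl)
  moreover have "card V = gf m x y" using V(2) gf_sym[OF mpos] by simp
  moreover have "\<forall>S\<subseteq>V. k_dense k (compl_graph E) S \<longrightarrow> card S \<le> x"
    using V(4) compl_compl_sparse[OF sg] by blast
  moreover have "\<forall>S\<subseteq>V. k_sparse k (compl_graph E) S \<longrightarrow> card S \<le> y"
    using V(3) unfolding k_dense_def by blast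
  ultimately show ?thesis by blast
qed

lemma sparse_img:
  assumes "inj_on h S"
  shows "k_sparse k R (h ` S) \<longleftrightarrow> (\<forall>v\<in>S. card {u\<in>S. R (h v) (h u)} \<le> k)"
proof -
  have "card {w\<in>h ` S. R (h v) w} = card {u\<in>S. R (h v) (h u)}" for v
  proof -
    have "{w\<in>h ` S. R (h v) w} = h ` {u\<in>S. R (h v) (h u)}" by blast
    moreover have "inj_on h {u\<in>S. R (h v) (h u)}" using assms by (rule inj_on_subset) blast
    ultimately show ?thesis by (simp add: card_image)
  qed
  thus ?thesis unfolding k_sparse_def by auto
qed

lemma transfer:
  fixes V :: "'b set"
  assumes c: "cograph V E" and N: "card V = N"
    and D: "\<forall>S\<subseteq>V. k_dense k E S \<longrightarrow> card S \<le> x" and Sp: "\<forall>S\<subseteq>V. k_sparse k E S \<longrightarrow> card S \<le> y"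
  shows "\<exists>E'::nat\<Rightarrow>nat\<Rightarrow>bool. cograph {0..<N} E' \<and> (\<forall>S\<subseteq>{0..<N}. k_dense k E' S \<longrightarrow> card S \<le> x)
     \<and> (\<forall>S\<subseteq>{0..<N}. k_sparse k E' S \<longrightarrow> card S \<le> y)"
proof -
  have sg: "simple_graph V E" using c by (simp add: cograph_def)
  have fin: "finite V" using sg by (simp add: simple_graph_def)
  obtain h where h: "bij_betw h {0..<N} V" using ex_bij_betw_nat_finite[OF fin] N by blast
  have inj: "inj_on h {0..<N}" and img: "h ` {0..<N} = V" using h by (auto simp: bij_betw_def)
  define E' where "E' u v = E (h u) (h v)" for u v
  have hV: "u \<in> {0..<N} \<Longrightarrow> h u \<in> V" for u using img by blast
  have sg': "simple_graph {0..<N} E'"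
    unfolding simple_graph_def E'_def using sg hV by (auto simp: simple_graph_def)
  have c': "cograph {0..<N} E'" unfolding cograph_def
  proof (intro conjI sg' notI)
    assume "\<exists>a\<in>{0..<N}. \<exists>b\<in>{0..<N}. \<exists>c\<in>{0..<N}. \<exists>d\<in>{0..<N}. distinct [a, b, c, d] \<and>
         E' a b \<and> E' b c \<and> E' c d \<and> \<not> E' a c \<and> \<not> E' b d \<and> \<not> E' a d"
    then obtain a b cc d where in4: "a \<in> {0..<N}" "b \<in> {0..<N}" "cc \<in> {0..<N}" "d \<in> {0..<N}"
      and h4: "distinct [a, b, cc, d]" "E' a b" "E' b cc" "E' cc d" "\<not> E' a cc" "\<not> E' b d" "\<not> E' a d"
      by blast
    have "distinct [h a, h b, h cc, h d]" using h4(1) in4 inj by (auto simp: inj_on_eq_iff)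
    moreover have "h a \<in> V" "h b \<in> V" "h cc \<in> V" "h d \<in> V" using in4 hV by auto
    ultimately show False using c h4 unfolding cograph_def E'_def by blast
  qed
  have key: "S \<subseteq> {0..<N} \<Longrightarrow> (k_sparse k E' S \<longleftrightarrow> k_sparse k E (h ` S)) \<and>
      (k_dense k E' S \<longleftrightarrow> k_dense k E (h ` S)) \<and> card (h ` S) = card S \<and> h ` S \<subseteq> V" for S
  proof -
    assume S: "S \<subseteq> {0..<N}"
    have injS: "inj_on h S" using inj S by (rule inj_on_subset)
    have 1: "k_sparse k E' S \<longleftrightarrow> k_sparse k E (h ` S)"
      unfolding sparse_img[OF injS] unfolding k_sparse_def E'_def by simp
    have "\<And>v u. v \<in> S \<Longrightarrow> u \<in> S \<Longrightarrow> compl_graph E' v u = compl_graph E (h v) (h u)"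
      unfolding compl_graph_def E'_def using injS by (auto simp: inj_on_eq_iff)
    hence "\<And>v. v \<in> S \<Longrightarrow> {u\<in>S. compl_graph E' v u} = {u\<in>S. compl_graph E (h v) (h u)}" by auto
    hence 2: "k_dense k E' S \<longleftrightarrow> k_dense k E (h ` S)"
      unfolding k_dense_def sparse_img[OF injS] unfolding k_sparse_def by simp
    have 3: "card (h ` S) = card S" using injS by (rule card_image)
    have 4: "h ` S \<subseteq> V" using S hV by blast
    show ?thesis using 1 2 3 4 by blast
  qed
  have "\<forall>S\<subseteq>{0..<N}. k_dense k E' S \<longrightarrow> card S \<le> x"
  proof (intro allI impI)
    fix S assume "S \<subseteq> {0..<N}" "k_dense k E' S"
    thus "card S \<le> x" using key[of S] D by metis
  qed
  moreover have "\<forall>S\<subseteq>{0..<N}. k_sparse k E' S \<longrightarrow> card S \<le> y"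
  proof (intro allI impI)
    fix S assume "S \<subseteq> {0..<N}" "k_sparse k E' S"
    thus "card S \<le> y" using key[of S] Sp by metis
  qed
  ultimately show ?thesis using c' by blast
qed

theorem theorem7p2:
  fixes k i j :: nat
  assumes "i \<ge> k + 2" and "j \<ge> k + 2"
  shows "ramsey_CO k i j =
    1 + ((i - 1) * (j - 1) - ((i - 1) mod (k + 1)) * ((j - 1) mod (k + 1))) div (k + 1)"
proof -
  define m where "m = k + 1"
  define x where "x = i - 1"
  define y where "y = j - 1"
  define N where "N = gf m x y"
  have mx: "m \<le> x" and my: "m \<le> y" unfolding m_def x_def y_def using assms by auto
  have mpos: "0 < m" unfolding m_def by simp
  have form: "((i - 1) * (j - 1) - ((i - 1) mod (k + 1)) * ((j - 1) mod (k + 1))) div (k + 1) = N"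
    unfolding N_def m_def x_def y_def by (rule gf_formula) simp
  define P where "P n \<longleftrightarrow> (\<forall>E :: nat \<Rightarrow> nat \<Rightarrow> bool. cograph {0..<n} E \<longrightarrow>
      (\<exists>S\<subseteq>{0..<n}. card S = i \<and> k_dense k E S) \<or>
      (\<exists>S\<subseteq>{0..<n}. card S = j \<and> k_sparse k E S))" for n
  have ix: "i = x + 1" and jy: "j = y + 1" unfolding x_def y_def using assms by auto
  have PN: "P (N + 1)" unfolding P_def
  proof (intro allI impI)
    fix E :: "nat \<Rightarrow> nat \<Rightarrow> bool" assume c: "cograph {0..<N+1} E"
    show "(\<exists>S\<subseteq>{0..<N+1}. card S = i \<and> k_dense k E S) \<or> (\<exists>S\<subseteq>{0..<N+1}. card S = j \<and> k_sparse k E S)"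
    proof (rule ccontr)
      assume neg: "\<not> ?thesis"
      have D: "\<forall>S\<subseteq>{0..<N+1}. k_dense k E S \<longrightarrow> card S \<le> x"
      proof (intro allI impI)
        fix S assume S: "S \<subseteq> {0..<N+1}" "k_dense k E S"
        show "card S \<le> x"
        proof (rule ccontr)
          assume "\<not> card S \<le> x"
          hence "i \<le> card S" using ix by simp
          then obtain T where T: "T \<subseteq> S" "card T = i" by (rule obtain_subset_with_card_n)
          have "finite S" using S(1) finite_subset by blast
          hence "k_dense k E T" using dense_mono T S(2) by blast
          thus False using neg T S(1) by blast
        qed
      qed
      have Sp: "\<forall>S\<subseteq>{0..<N+1}. k_sparse k E S \<longrightarrow> card S \<le> y"
      proof (intro allI impI)
        fix S assume S: "S \<subseteq> {0..<N+1}" "k_sparse k E S"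
        show "card S \<le> y"
        proof (rule ccontr)
          assume "\<not> card S \<le> y"
          hence "j \<le> card S" using jy by simp
          then obtain T where T: "T \<subseteq> S" "card T = j" by (rule obtain_subset_with_card_n)
          have "finite S" using S(1) finite_subset by blast
          hence "k_sparse k E T" using sparse_mono T S(2) by blast
          thus False using neg T S(1) by blast
        qed
      qed
      have "card {0..<N+1} \<le> gf (k+1) x y"
        using UB[of "N+1" k, rule_format, of "{0..<N+1}" E x y] c D Sp mx my unfolding m_def by simp
      thus False unfolding N_def m_def by simp
    qed
  qed
  have minimal: "N + 1 \<le> n" if Pn: "P n" for n
  proof (rule ccontr)
    assume "\<not> N + 1 \<le> n"
    hence nN: "n \<le> N" by simp
    obtain V :: "(nat \<times> nat \<times> nat) set" and E where V: "cograph V E" "card V = N"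
      "\<forall>S\<subseteq>V. k_dense k E S \<longrightarrow> card S \<le> x" "\<forall>S\<subseteq>V. k_sparse k E S \<longrightarrow> card S \<le> y"
      using LB[OF m_def mx my] unfolding N_def by blast
    obtain E' :: "nat \<Rightarrow> nat \<Rightarrow> bool" where E': "cograph {0..<N} E'"
      "\<forall>S\<subseteq>{0..<N}. k_dense k E' S \<longrightarrow> card S \<le> x" "\<forall>S\<subseteq>{0..<N}. k_sparse k E' S \<longrightarrow> card S \<le> y"
      using transfer[OF V] by blast
    have sub: "{0..<n} \<subseteq> {0..<N}" using nN by auto
    have "cograph {0..<n} E'" using E'(1) sub by (rule cograph_subset)
    hence "(\<exists>S\<subseteq>{0..<n}. card S = i \<and> k_dense k E' S) \<or> (\<exists>S\<subseteq>{0..<n}. card S = j \<and> k_sparse k E' S)"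
      using Pn unfolding P_def by blast
    thus False
    proof
      assume "\<exists>S\<subseteq>{0..<n}. card S = i \<and> k_dense k E' S"
      then obtain S where "S \<subseteq> {0..<n}" "card S = i" "k_dense k E' S" by blast
      hence "card S \<le> x" using E'(2) sub by blast
      thus False using \<open>card S = i\<close> ix by simp
    next
      assume "\<exists>S\<subseteq>{0..<n}. card S = j \<and> k_sparse k E' S"
      then obtain S where "S \<subseteq> {0..<n}" "card S = j" "k_sparse k E' S" by blast
      hence "card S \<le> y" using E'(3) sub by blast
      thus False using \<open>card S = j\<close> jy by simp
    qed
  qed
  have "ramsey_CO k i j = (LEAST n. P n)" unfolding ramsey_CO_def P_def by simp
  also have "\<dots> = N + 1" by (rule Least_equality[of P, OF PN minimal])
  finally show ?thesis using form by simp
qed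

end
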